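(* Let $u\in\Lambda$ with $G^{>}_u\neq\emptyset$. Then there exist $a>0$, $b\in(0,1)$ and $c\in\mathbb R$ such that: (1) $\{k\in\mathbb N: u_k>c\}\neq\emptyset$; (2) $u_k\le ab^k+c$ for all $k\in\mathbb N$; (3) $u_{\mathbf K^s_u}=ab^{\mathbf K^s_u}+c$.
   Context: For a real sequence $u=(u_k)_{k\in\mathbb N}$: $\Lambda$ is the set of real sequences with $\sup_n u_n<+\infty$; $G^{>}_u=\{k\in\mathbb N: u_k>\limsup_{n\to\infty}u_n\}$; $\Delta^s_u=\{k\in\mathbb N:\max_{0\le j\le k}u_j>\sup_{j>k}u_j\}$ and $\mathbf K^s_u=\inf\Delta^s_u$ (with $\inf\emptyset=+\infty$). *)

theory Defs
  imports "HOL-Analysis.Analysis" "HOL-Library.Extended_Nat"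
begin

definition Lambda :: "(nat \<Rightarrow> real) set" where
  "Lambda = {u. bdd_above (range u)}"

definition G_gt :: "(nat \<Rightarrow> real) \<Rightarrow> nat set" where
  "G_gt u = {k. ereal (u k) > limsup (\<lambda>n. ereal (u n))}"

definition Delta_s :: "(nat \<Rightarrow> real) \<Rightarrow> nat set" where
  "Delta_s u = {k. ereal (Max (u ` {0..k})) > (SUP j\<in>{k<..}. ereal (u j))}"

text \<open>K^s_u = inf Delta^s_u, with inf of the empty set = infinity (value in enat).\<close>
definition K_s :: "(nat \<Rightarrow> real) \<Rightarrow> enat" where
  "K_s u = (INF k\<in>Delta_s u. enat k)"

end

theory Submission
  imports Defs
begin

lemma Max_insert_less:
  fixes F :: "real set"
  assumes "finite F" "\<forall>x\<in>F. x < M" "t < M"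
  shows "Max (insert t F) < M"
  using assms by (simp add: Max_less_iff)

lemma in_Delta:
  fixes u :: "nat \<Rightarrow> real"
  assumes "\<forall>j>i. u j \<le> B" "B < Max (u ` {0..i})"
  shows "i \<in> Delta_s u"
proof -
  have "(SUP j\<in>{i<..}. ereal (u j)) \<le> ereal B"
    using assms(1) by (auto intro!: SUP_least)
  also have "\<dots> < ereal (Max (u ` {0..i}))" using assms(2) by simp
  finally show ?thesis unfolding Delta_s_def by simp
qed

lemma last_max:
  fixes u :: "nat \<Rightarrow> real"
  assumes "\<forall>j>N. u j \<le> t" "t < Max (u ` {0..N})"
  shows "\<exists>m\<le>N. u m = Max (u ` {0..N}) \<and> m \<in> Delta_s u"
proof -
  define Mx where "Mx = Max (u ` {0..N})"
  define I where "I = {k. k \<le> N \<and> u k = Mx}"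
  have fI: "finite I" unfolding I_def by auto
  have "Mx \<in> u ` {0..N}" unfolding Mx_def by (intro Max_in) auto
  then have neI: "I \<noteq> {}" unfolding I_def by auto
  define m where "m = Max I"
  have mI: "m \<in> I" unfolding m_def using fI neI by (rule Max_in)
  have ule: "\<And>k. k \<le> N \<Longrightarrow> u k \<le> Mx" unfolding Mx_def by auto
  define B where "B = Max (insert t (u ` {m<..N}))"
  have lt: "\<forall>x\<in>u ` {m<..N}. x < Mx"
  proof
    fix x assume "x \<in> u ` {m<..N}"
    then obtain j where j: "m < j" "j \<le> N" "x = u j" by auto
    have "j \<notin> I" using j fI m_def Max_ge leD by blast
    then show "x < Mx" using j ule[of j] unfolding I_def by force
  qed
  have BM: "B < Mx" unfolding B_def
    by (rule Max_insert_less) (use lt assms(2) Mx_def in auto)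
  have Bb: "\<forall>j>m. u j \<le> B"
  proof (intro allI impI)
    fix j assume "m < j"
    show "u j \<le> B"
    proof (cases "j \<le> N")
      case True then show ?thesis unfolding B_def using \<open>m<j\<close> by (intro Max_ge) auto
    next
      case False then have "u j \<le> t" using assms(1) by auto
      also have "t \<le> B" unfolding B_def by (intro Max_ge) auto
      finally show ?thesis .
    qed
  qed
  have "Max (u ` {0..m}) = Mx"
  proof (rule antisym)
    show "Max (u ` {0..m}) \<le> Mx" using mI ule unfolding I_def by (auto simp: Max_le_iff)
    show "Mx \<le> Max (u ` {0..m})" using mI unfolding I_def by (intro Max_ge) auto
  qed
  then have "m \<in> Delta_s u" using Bb BM by (intro in_Delta[of m u B]) auto
  then show ?thesis using mI unfolding I_def Mx_def by auto
qed

theorem mainTheorem3: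
  fixes u :: "nat \<Rightarrow> real"
  assumes "u \<in> Lambda" and "G_gt u \<noteq> {}"
  shows "\<exists>a b c :: real. a > 0 \<and> 0 < b \<and> b < 1 \<and>
           {k. u k > c} \<noteq> {} \<and>
           (\<forall>k. u k \<le> a * b ^ k + c) \<and>
           (\<exists>K. K_s u = enat K \<and> u K = a * b ^ K + c)"
proof -
  have bdd: "bdd_above (range u)" using assms(1) unfolding Lambda_def by auto
  obtain k0 where k0: "ereal (u k0) > limsup (\<lambda>n. ereal (u n))"
    using assms(2) unfolding G_gt_def by auto
  obtain t :: ereal where t: "limsup (\<lambda>n. ereal (u n)) < t" "t < ereal (u k0)"
    using k0 dense by blast
  obtain tr where tr: "t = ereal tr" using t by (cases t) auto
  have "eventually (\<lambda>n. ereal (u n) < t) sequentially"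
    using t(1) Limsup_lessD by blast
  then obtain N0 where N0: "\<forall>n\<ge>N0. u n < tr" using tr by (auto simp: eventually_sequentially)
  define N where "N = max N0 k0"
  have A1: "\<forall>j>N. u j \<le> tr" using N0 N_def by (auto intro: less_imp_le)
  have "tr < u k0" using t tr by auto
  also have "u k0 \<le> Max (u ` {0..N})" unfolding N_def by (intro Max_ge) auto
  finally obtain m where "m \<in> Delta_s u" using last_max[OF A1] by blast
  then have neD: "Delta_s u \<noteq> {}" by auto
  define K where "K = (LEAST k. k \<in> Delta_s u)"
  have KD: "K \<in> Delta_s u" unfolding K_def using neD by (auto intro: LeastI)
  have Kmin: "\<And>i. i \<in> Delta_s u \<Longrightarrow> K \<le> i" unfolding K_def by (rule Least_le)
  have KS: "K_s u = enat K"
    unfolding K_s_def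
  proof (rule antisym)
    show "(INF k\<in>Delta_s u. enat k) \<le> enat K" using KD by (rule INF_lower)
    show "enat K \<le> (INF k\<in>Delta_s u. enat k)" using Kmin by (auto intro!: INF_greatest)
  qed
  define S where "S = (SUP j\<in>{K<..}. ereal (u j))"
  have SM: "S < ereal (Max (u ` {0..K}))" using KD unfolding Delta_s_def S_def by auto
  have "ereal (u (Suc K)) \<le> S" unfolding S_def by (intro SUP_upper) auto
  then obtain s where s: "S = ereal s" using SM by (cases S) auto
  have ujs: "\<And>j. j > K \<Longrightarrow> u j \<le> s"
  proof -
    fix j assume "j > K"
    then have "ereal (u j) \<le> S" unfolding S_def by (intro SUP_upper) auto
    then show "u j \<le> s" using s by simp
  qed
  have sM: "s < Max (u ` {0..K})" using SM s by simp
  have uKmax: "u K = Max (u ` {0..K})"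
  proof (rule ccontr)
    assume ne: "u K \<noteq> Max (u ` {0..K})"
    have A2: "\<forall>j>K. u j \<le> s" using ujs by auto
    obtain i where i: "i \<le> K" "u i = Max (u ` {0..K})" "i \<in> Delta_s u"
      using last_max[OF A2 sM] by blast
    then have "i < K" using ne le_neq_implies_less by blast
    then show False using Kmin[OF i(3)] by simp
  qed
  have ukK: "\<And>k. k \<le> K \<Longrightarrow> u k \<le> u K" using uKmax by auto
  have usK: "s < u K" using uKmax sM by simp
  define a where "a = (u K - s) * 2 ^ K"
  have apos: "a > 0" unfolding a_def using usK by simp
  have eqK: "u K = a * (1/2) ^ K + s" unfolding a_def by (simp add: power_one_over)
  have bound: "\<forall>k. u k \<le> a * (1/2) ^ k + s"
  proof
    fix k
    show "u k \<le> a * (1/2) ^ k + s"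
    proof (cases "k \<le> K")
      case True
      have "(1/2::real) ^ K \<le> (1/2) ^ k" using True by (rule power_decreasing) auto
      then have "a * (1/2) ^ K \<le> a * (1/2) ^ k" using apos by simp
      then show ?thesis using ukK[OF True] eqK by linarith
    next
      case False
      then have "u k \<le> s" using ujs by simp
      moreover have "a * (1/2) ^ k > 0" using apos by simp
      ultimately show ?thesis by linarith
    qed
  qed
  have "{k. u k > s} \<noteq> {}" using usK by auto
  then show ?thesis using apos bound KS eqK
    by (intro exI[of _ a] exI[of _ "1/2"] exI[of _ s]) auto
qed

end
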